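(* If $G$ is a finite group, then $S(G) = F(G)$.
   Context: $S(G) := \{ x \in G : x^{|G:H|} \in H \text{ for every subgroup } H \leqslant G \text{ of finite index}\}$. $F(G)$ is the Fitting subgroup of $G$, i.e. its largest nilpotent normal subgroup. *)

theory Defs
  imports "HOL-Algebra.Algebra"
begin

fun lower_central_series :: "('a, 'b) monoid_scheme \<Rightarrow> nat \<Rightarrow> 'a set" where
  "lower_central_series K 0 = carrier K"
| "lower_central_series K (Suc n) =
     generate K (\<Union>x \<in> lower_central_series K n. \<Union>y \<in> carrier K.
        { x \<otimes>\<^bsub>K\<^esub> y \<otimes>\<^bsub>K\<^esub> inv\<^bsub>K\<^esub> x \<otimes>\<^bsub>K\<^esub> inv\<^bsub>K\<^esub> y })"

definition nilpotent_group :: "('a, 'b) monoid_scheme \<Rightarrow> bool" where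
  "nilpotent_group K \<longleftrightarrow> group K \<and> (\<exists>n. lower_central_series K n = {\<one>\<^bsub>K\<^esub>})"

definition fitting_subgroup :: "('a, 'b) monoid_scheme \<Rightarrow> 'a set" where
  "fitting_subgroup G = (THE F. F \<lhd> G \<and> nilpotent_group (G\<lparr>carrier := F\<rparr>) \<and>
      (\<forall>N. N \<lhd> G \<and> nilpotent_group (G\<lparr>carrier := N\<rparr>) \<longrightarrow> N \<subseteq> F))"

definition S_set :: "('a, 'b) monoid_scheme \<Rightarrow> 'a set" where
  "S_set G = {x \<in> carrier G. \<forall>H. subgroup H G \<and> finite (rcosets\<^bsub>G\<^esub> H) \<longrightarrow>
      x [^]\<^bsub>G\<^esub> card (rcosets\<^bsub>G\<^esub> H) \<in> H}"

end

theory Submission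
  imports Defs
begin

definition comm :: "('a, 'b) monoid_scheme \<Rightarrow> 'a \<Rightarrow> 'a \<Rightarrow> 'a" where
  "comm G x y = x \<otimes>\<^bsub>G\<^esub> y \<otimes>\<^bsub>G\<^esub> inv\<^bsub>G\<^esub> x \<otimes>\<^bsub>G\<^esub> inv\<^bsub>G\<^esub> y"

fun lcs :: "('a, 'b) monoid_scheme \<Rightarrow> 'a set \<Rightarrow> nat \<Rightarrow> 'a set" where
  "lcs G M 0 = M"
| "lcs G M (Suc n) = generate G (\<Union>x \<in> lcs G M n. \<Union>y \<in> M. {comm G x y})"

fun ucs :: "('a, 'b) monoid_scheme \<Rightarrow> 'a set \<Rightarrow> nat \<Rightarrow> 'a set" where
  "ucs G N 0 = {\<one>\<^bsub>G\<^esub>}"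
| "ucs G N (Suc i) = {x \<in> N. \<forall>g\<in>N. comm G x g \<in> ucs G N i}"

definition syl :: "('a, 'b) monoid_scheme \<Rightarrow> nat \<Rightarrow> 'a set set" where
  "syl G p = {P. subgroup P G \<and> card P = p ^ multiplicity p (order G)}"

definition Op :: "('a, 'b) monoid_scheme \<Rightarrow> nat \<Rightarrow> 'a set" where
  "Op G p = {x \<in> carrier G. \<forall>P\<in>syl G p. x \<in> P}"

definition Fit :: "('a, 'b) monoid_scheme \<Rightarrow> 'a set" where
  "Fit G = generate G (\<Union>p\<in>{p. Factorial_Ring.prime p}. Op G p)"

context group
begin

lemma inv_cancel_l[simp]: "x \<in> carrier G \<Longrightarrow> y \<in> carrier G \<Longrightarrow> inv x \<otimes> (x \<otimes> y) = y"
  by (simp flip: m_assoc)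

lemma inv_cancel_r[simp]: "x \<in> carrier G \<Longrightarrow> y \<in> carrier G \<Longrightarrow> x \<otimes> (inv x \<otimes> y) = y"
  by (simp flip: m_assoc)

lemma comm_closed[simp]: "x \<in> carrier G \<Longrightarrow> y \<in> carrier G \<Longrightarrow> comm G x y \<in> carrier G"
  by (simp add: comm_def)

lemma comm_one_right[simp]: "x \<in> carrier G \<Longrightarrow> comm G x \<one> = \<one>"
  by (simp add: comm_def)

lemma comm_one_left[simp]: "x \<in> carrier G \<Longrightarrow> comm G \<one> x = \<one>"
  by (simp add: comm_def m_assoc)

lemma conj_comm: "g \<in> carrier G \<Longrightarrow> x \<in> carrier G \<Longrightarrow> y \<in> carrier G \<Longrightarrow>
  g \<otimes> comm G x y \<otimes> inv g = comm G (g \<otimes> x \<otimes> inv g) (g \<otimes> y \<otimes> inv g)"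
  by (simp add: comm_def m_assoc inv_mult_group)

lemma comm_mult_right: "a \<in> carrier G \<Longrightarrow> g \<in> carrier G \<Longrightarrow> h \<in> carrier G \<Longrightarrow>
  comm G a (g \<otimes> h) = comm G a g \<otimes> (g \<otimes> comm G a h \<otimes> inv g)"
  by (simp add: comm_def m_assoc inv_mult_group)

lemma comm_inv_right: "a \<in> carrier G \<Longrightarrow> g \<in> carrier G \<Longrightarrow>
  comm G a (inv g) = inv g \<otimes> inv (comm G a g) \<otimes> inv (inv g)"
  by (simp add: comm_def m_assoc inv_mult_group)

lemma comm_mult_left: "x \<in> carrier G \<Longrightarrow> y \<in> carrier G \<Longrightarrow> g \<in> carrier G \<Longrightarrow>
  comm G (x \<otimes> y) g = (x \<otimes> comm G y g \<otimes> inv x) \<otimes> comm G x g"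
  by (simp add: comm_def m_assoc inv_mult_group)

lemma comm_inv_left: "x \<in> carrier G \<Longrightarrow> g \<in> carrier G \<Longrightarrow>
  comm G (inv x) g = inv x \<otimes> inv (comm G x g) \<otimes> inv (inv x)"
  by (simp add: comm_def m_assoc inv_mult_group)

lemma comm_inv: "x \<in> carrier G \<Longrightarrow> g \<in> carrier G \<Longrightarrow>
  inv (comm G x g) = comm G g x"
  by (simp add: comm_def m_assoc inv_mult_group)


lemma subgroup_conj:
  "subgroup H G \<Longrightarrow> m \<in> H \<Longrightarrow> x \<in> H \<Longrightarrow> m \<otimes> x \<otimes> inv m \<in> H"
  by (meson subgroup.m_closed subgroup.m_inv_closed)

lemma subgroup_comm:
  "subgroup H G \<Longrightarrow> x \<in> H \<Longrightarrow> y \<in> H \<Longrightarrow> comm G x y \<in> H"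
  unfolding comm_def by (meson subgroup.m_closed subgroup.m_inv_closed)

lemma generate_conj_closed:
  assumes S: "S \<subseteq> carrier G" and A: "A \<subseteq> carrier G"
    and inv: "\<And>a s. a \<in> A \<Longrightarrow> s \<in> S \<Longrightarrow> a \<otimes> s \<otimes> inv a \<in> S"
    and a: "a \<in> A" and h: "h \<in> generate G S"
  shows "a \<otimes> h \<otimes> inv a \<in> generate G S"
  using h
proof (induct h rule: generate.induct)
  case one
  have "a \<in> carrier G" using a A by auto
  thus ?case by (simp add: generate.one)
next
  case (incl h) show ?case using generate.incl[OF inv[OF a incl]] .
next
  case (inv h)
  have h: "h \<in> carrier G" "a \<in> carrier G" using S A inv a by auto
  hence "inv (a \<otimes> h \<otimes> (inv a)) = a \<otimes> (inv h) \<otimes> (inv a)"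
    by (simp add: inv_mult_group m_assoc)
  thus ?case
    using generate_m_inv_closed[OF S generate.incl[OF assms(3)[OF a inv]]] by simp
next
  case (eng h1 h2)
  note in_carrier = eng(1,3)[THEN generate_in_carrier[OF S]]
  have "a \<otimes> (h1 \<otimes> h2) \<otimes> inv a = (a \<otimes> h1 \<otimes> inv a) \<otimes> (a \<otimes> h2 \<otimes> inv a)"
    using in_carrier a A subsetD[OF A a] by (simp add: m_assoc)
  thus ?case
    using generate.eng[OF eng(2,4)] by simp
qed

lemma lcs_props:
  assumes M: "subgroup M G"
  shows "lcs G M n \<subseteq> M \<and> subgroup (lcs G M n) G \<and>
         (\<forall>m\<in>M. \<forall>x\<in>lcs G M n. m \<otimes> x \<otimes> inv m \<in> lcs G M n)"
proof (induct n)
  case 0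
  then show ?case using M subgroup_conj[OF M] by simp
next
  case (Suc n)
  have Mc: "M \<subseteq> carrier G" using M subgroup.subset by blast
  define S where "S = (\<Union>x \<in> lcs G M n. \<Union>y \<in> M. {comm G x y})"
  have SM: "S \<subseteq> M"
    using Suc subgroup_comm[OF M] unfolding S_def by blast
  have SI: "m \<otimes> s \<otimes> inv m \<in> S" if "m \<in> M" "s \<in> S" for m s
  proof -
    obtain x y where xy: "x \<in> lcs G M n" "y \<in> M" "s = comm G x y" using \<open>s \<in> S\<close> S_def by auto
    have c: "m \<in> carrier G" "x \<in> carrier G" "y \<in> carrier G" using xy that Mc Suc by auto
    have "m \<otimes> s \<otimes> inv m = comm G (m \<otimes> x \<otimes> inv m) (m \<otimes> y \<otimes> inv m)"
      using conj_comm c xy by simp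
    moreover have "m \<otimes> x \<otimes> inv m \<in> lcs G M n" using Suc that xy by blast
    moreover have "m \<otimes> y \<otimes> inv m \<in> M" using subgroup_conj[OF M] that xy by blast
    ultimately show ?thesis unfolding S_def by blast
  qed
  have "lcs G M (Suc n) = generate G S" by (simp add: S_def)
  moreover have "generate G S \<subseteq> M" using generate_subgroup_incl[OF SM M] .
  moreover have "subgroup (generate G S) G" using generate_is_subgroup SM Mc by blast
  moreover have "\<forall>m\<in>M. \<forall>x\<in>generate G S. m \<otimes> x \<otimes> inv m \<in> generate G S"
    using generate_conj_closed[of S M] SM Mc SI by blast
  ultimately show ?case by simp
qed

lemma lcs_comm:
  assumes "x \<in> lcs G M n" "y \<in> M"
  shows "comm G x y \<in> lcs G M (Suc n)"
  using assms by (auto intro: generate.incl)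

lemma lcs_Suc_subset:
  assumes M: "subgroup M G"
  shows "lcs G M (Suc n) \<subseteq> lcs G M n"
proof -
  note P = lcs_props[OF M, of n]
  have L: "subgroup (lcs G M n) G" and LM: "lcs G M n \<subseteq> M"
    and I: "\<And>m x. m \<in> M \<Longrightarrow> x \<in> lcs G M n \<Longrightarrow> m \<otimes> x \<otimes> inv m \<in> lcs G M n"
    using P by auto
  have Mc: "M \<subseteq> carrier G" using M subgroup.subset by blast
  have "(\<Union>x \<in> lcs G M n. \<Union>y \<in> M. {comm G x y}) \<subseteq> lcs G M n"
  proof clarify
    fix x y assume xy: "x \<in> lcs G M n" "y \<in> M"
    have c: "x \<in> carrier G" "y \<in> carrier G" using xy LM Mc by auto
    have "comm G x y = x \<otimes> (y \<otimes> inv x \<otimes> inv y)" using c by (simp add: comm_def m_assoc)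
    moreover have "y \<otimes> inv x \<otimes> inv y \<in> lcs G M n"
      using I[OF xy(2) subgroup.m_inv_closed[OF L xy(1)]] .
    ultimately show "comm G x y \<in> lcs G M n" using subgroup.m_closed[OF L xy(1)] by simp
  qed
  thus ?thesis using generate_subgroup_incl[OF _ L] by simp
qed

lemma lcs_consistent:
  assumes M: "subgroup M G"
  shows "lower_central_series (G\<lparr>carrier := M\<rparr>) n = lcs G M n"
proof (induct n)
  case 0 thus ?case by simp
next
  case (Suc n)
  note P = lcs_props[OF M, of n]
  have eq: "(\<Union>x \<in> lcs G M n. \<Union>y \<in> M. { x \<otimes> y \<otimes>\<^bsub>G\<lparr>carrier := M\<rparr>\<^esub> inv\<^bsub>G\<lparr>carrier := M\<rparr>\<^esub> x \<otimes>\<^bsub>G\<lparr>carrier := M\<rparr>\<^esub> inv\<^bsub>G\<lparr>carrier := M\<rparr>\<^esub> y })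
     = (\<Union>x \<in> lcs G M n. \<Union>y \<in> M. {comm G x y})"
  proof (intro SUP_cong refl)
    fix x y assume xy: "x \<in> lcs G M n" "y \<in> M"
    hence "x \<in> M" using P by blast
    thus "{ x \<otimes> y \<otimes>\<^bsub>G\<lparr>carrier := M\<rparr>\<^esub> inv\<^bsub>G\<lparr>carrier := M\<rparr>\<^esub> x \<otimes>\<^bsub>G\<lparr>carrier := M\<rparr>\<^esub> inv\<^bsub>G\<lparr>carrier := M\<rparr>\<^esub> y } = {comm G x y}"
      using xy M by (simp add: comm_def)
  qed
  have sub: "(\<Union>x \<in> lcs G M n. \<Union>y \<in> M. {comm G x y}) \<subseteq> M"
    using P subgroup_comm[OF M] by blast
  show ?case using Suc eq generate_consistent[OF sub M] by simp
qed


lemma quotient_pow: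
  assumes fin: "finite (carrier G)" and B: "subgroup B G" and A: "subgroup A G" and AB: "A \<subseteq> B"
    and nrm: "\<And>b a. b \<in> B \<Longrightarrow> a \<in> A \<Longrightarrow> b \<otimes> a \<otimes> inv b \<in> A"
    and z: "z \<in> B"
  shows "z [^] (card B div card A) \<in> A"
proof -
  define K where "K = G\<lparr>carrier := B\<rparr>"
  have K: "group K" unfolding K_def using subgroup_imp_group[OF B] .
  have AK: "subgroup A K" unfolding K_def using subgroup_incl[OF A B AB] .
  have nK: "A \<lhd> K"
  proof (rule group.normal_invI[OF K AK])
    fix x h assume "x \<in> carrier K" "h \<in> A"
    thus "x \<otimes>\<^bsub>K\<^esub> h \<otimes>\<^bsub>K\<^esub> inv\<^bsub>K\<^esub> x \<in> A"
      using nrm B unfolding K_def by simp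
  qed
  interpret N: normal A K using nK .
  have Qg: "group (K Mod A)" using N.factorgroup_is_group .
  have zK: "z \<in> carrier K" using z unfolding K_def by simp
  have zc: "z \<in> carrier G" using z B subgroup.subset by blast
  have mem: "A #>\<^bsub>K\<^esub> z \<in> carrier (K Mod A)"
    using zK unfolding FactGroup_def RCOSETS_def by auto
  have "(A #>\<^bsub>K\<^esub> z) [^]\<^bsub>K Mod A\<^esub> order (K Mod A) = \<one>\<^bsub>K Mod A\<^esub>"
    using group.pow_order_eq_1[OF Qg mem] .
  moreover have "order (K Mod A) = card B div card A"
  proof -
    have "card (rcosets\<^bsub>K\<^esub> A) * card A = order K" using group.lagrange[OF K AK] .
    moreover have "order K = card B" unfolding K_def order_def by simp
    moreover have "card A > 0"
      using A fin subgroup.subset subgroup.one_closed by (metis card_gt_0_iff empty_iff rev_finite_subset)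
    ultimately have e: "card (rcosets\<^bsub>K\<^esub> A) * card A = card B" and p: "card A > 0"
      by (simp_all add: order_def)
    have "card (rcosets\<^bsub>K\<^esub> A) = card B div card A"
      using e p by (metis nonzero_mult_div_cancel_right not_gr0)
    thus ?thesis unfolding order_def FactGroup_def by simp
  qed
  ultimately have "A #>\<^bsub>K\<^esub> (z [^]\<^bsub>K\<^esub> (card B div card A)) = A"
    using N.FactGroup_pow[OF zK] by simp
  moreover have "z [^]\<^bsub>K\<^esub> (card B div card A) = z [^] (card B div card A)"
    unfolding K_def by (rule nat_pow_consistent[symmetric])
  moreover have "A #>\<^bsub>K\<^esub> w = A #> w" for w unfolding K_def r_coset_def by simp
  ultimately have "A #> (z [^] (card B div card A)) = A" by simp
  thus ?thesis using rcos_self[OF nat_pow_closed[OF zc] A] by metis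
qed


lemma card_subgroup_pos:
  assumes "finite (carrier G)" "subgroup H G" shows "card H > 0"
  using assms subgroup.subset subgroup.one_closed by (metis card_gt_0_iff empty_iff rev_finite_subset)

lemma card_subgroup_dvd:
  assumes fin: "finite (carrier G)" and H: "subgroup H G" and K: "subgroup K G" and HK: "H \<subseteq> K"
  shows "card H dvd card K"
proof -
  have "card (rcosets\<^bsub>G\<lparr>carrier := K\<rparr>\<^esub> H) * card H = order (G\<lparr>carrier := K\<rparr>)"
    using group.lagrange[OF subgroup_imp_group[OF K] subgroup_incl[OF H K HK]] .
  thus ?thesis unfolding order_def by (metis dvd_triv_right partial_object.select_convs(1) partial_object.surjective partial_object.update_convs(1))
qed

lemma div_mult_chain:
  fixes a b m :: nat
  assumes "a dvd b" "b dvd m" "a > 0" "b > 0"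
  shows "m div b * (b div a) = m div a"
proof -
  obtain s where s: "b = a * s" using assms(1) by blast
  obtain t where t: "m = b * t" using assms(2) by blast
  show ?thesis using s t assms(3,4) by simp
qed

lemma nilpotent_power:
  assumes fin: "finite (carrier G)" and M: "subgroup M G" and c: "lcs G M c = {\<one>}"
    and Q: "subgroup Q G" and QM: "Q \<subseteq> M" and y: "y \<in> M"
  shows "y [^] (card M div card Q) \<in> Q"
proof -
  define K where "K = G\<lparr>carrier := M\<rparr>"
  have K: "group K" unfolding K_def using subgroup_imp_group[OF M] .
  have Mc: "M \<subseteq> carrier G" using M subgroup.subset by blast
  define T where "T n = lcs G M n <#> Q" for n
  have L: "subgroup (lcs G M n) G" "lcs G M n \<subseteq> M"
    "\<And>m x. m \<in> M \<Longrightarrow> x \<in> lcs G M n \<Longrightarrow> m \<otimes> x \<otimes> inv m \<in> lcs G M n" for n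
    using lcs_props[OF M, of n] by auto
  have QK: "subgroup Q K" unfolding K_def using subgroup_incl[OF Q M QM] .
  have nK: "lcs G M n \<lhd> K" for n
  proof (rule group.normal_invI[OF K])
    show "subgroup (lcs G M n) K" unfolding K_def using subgroup_incl[OF L(1) M L(2)] .
    fix x h assume "x \<in> carrier K" "h \<in> lcs G M n"
    thus "x \<otimes>\<^bsub>K\<^esub> h \<otimes>\<^bsub>K\<^esub> inv\<^bsub>K\<^esub> x \<in> lcs G M n"
      using L(3) M unfolding K_def by simp
  qed
  have TS: "subgroup (T n) G" for n
  proof -
    have "subgroup (lcs G M n <#>\<^bsub>K\<^esub> Q) K" using group.mult_norm_subgroup[OF K nK QK] .
    hence "subgroup (T n) K" unfolding T_def K_def by simp
    thus ?thesis using incl_subgroup[OF M] unfolding K_def by blast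
  qed
  have TM: "T n \<subseteq> M" for n
    using L(2) QM subgroup.m_closed[OF M] unfolding T_def set_mult_def by blast
  have Tmono: "T (Suc n) \<subseteq> T n" for n
    unfolding T_def using mono_set_mult[OF lcs_Suc_subset[OF M] subset_refl] .
  have T0: "T 0 = M"
  proof -
    have "M <#> Q = M" using set_mult_subgroup_idem[OF M QK[unfolded K_def]] .
    thus ?thesis unfolding T_def by simp
  qed
  have Tc: "T c = Q"
  proof -
    have "{\<one>} <#> Q = Q" using Q subgroup.subset unfolding set_mult_def by force
    thus ?thesis unfolding T_def c by simp
  qed
  have Tnorm: "b \<otimes> a \<otimes> inv b \<in> T (Suc n)" if b: "b \<in> T n" and a: "a \<in> T (Suc n)" for a b n
  proof -
    obtain g q where gq: "g \<in> lcs G M n" "q \<in> Q" "b = g \<otimes> q" using b unfolding T_def set_mult_def by blast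
    obtain g' q' where gq': "g' \<in> lcs G M (Suc n)" "q' \<in> Q" "a = g' \<otimes> q'" using a unfolding T_def set_mult_def by blast
    have gM: "g \<in> M" "g' \<in> M" "q \<in> M" "q' \<in> M" using gq gq' L(2) QM by blast+
    hence gc: "g \<in> carrier G" "g' \<in> carrier G" "q \<in> carrier G" "q' \<in> carrier G" using Mc by blast+
    define g'' where "g'' = q \<otimes> g' \<otimes> inv q"
    define q'' where "q'' = q \<otimes> q' \<otimes> inv q"
    have g'': "g'' \<in> lcs G M (Suc n)" unfolding g''_def using L(3) gM gq' by blast
    have q'': "q'' \<in> Q" unfolding q''_def using subgroup_conj[OF Q] gq gq' by blast
    have q''M: "q'' \<in> M" using q'' QM by blast
    have c'': "g'' \<in> carrier G" "q'' \<in> carrier G" unfolding g''_def q''_def using gc by auto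
    have eq: "b \<otimes> a \<otimes> inv b = (g \<otimes> g'' \<otimes> inv g \<otimes> comm G g q'') \<otimes> q''"
      unfolding gq(3) gq'(3) g''_def q''_def comm_def using gc by (simp add: m_assoc inv_mult_group)
    have "g \<otimes> g'' \<otimes> inv g \<in> lcs G M (Suc n)" using L(3) gM g'' by blast
    moreover have "comm G g q'' \<in> lcs G M (Suc n)" using lcs_comm[OF gq(1) q''M] .
    ultimately have "g \<otimes> g'' \<otimes> inv g \<otimes> comm G g q'' \<in> lcs G M (Suc n)"
      using subgroup.m_closed[OF L(1)] by blast
    thus ?thesis unfolding eq T_def set_mult_def using q'' by blast
  qed
  have cardpos: "card (T n) > 0" for n using card_subgroup_pos[OF fin TS] .
  have main: "\<forall>y\<in>M. y [^] (card M div card (T n)) \<in> T n" for n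
  proof (induct n)
    case 0
    have "card M > 0" using card_subgroup_pos[OF fin M] .
    thus ?case using T0 Mc by auto
  next
    case (Suc n)
    show ?case
    proof
      fix y assume y: "y \<in> M"
      hence yc: "y \<in> carrier G" using Mc by blast
      define z where "z = y [^] (card M div card (T n))"
      have z: "z \<in> T n" using Suc y unfolding z_def by blast
      have "z [^] (card (T n) div card (T (Suc n))) \<in> T (Suc n)"
        using quotient_pow[OF fin TS TS Tmono Tnorm z] .
      moreover have "card M div card (T n) * (card (T n) div card (T (Suc n))) = card M div card (T (Suc n))"
        by (rule div_mult_chain[OF card_subgroup_dvd[OF fin TS TS Tmono] card_subgroup_dvd[OF fin TS M TM] cardpos cardpos])
      moreover have "z [^] (card (T n) div card (T (Suc n))) = y [^] (card M div card (T n) * (card (T n) div card (T (Suc n))))"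
        unfolding z_def by (rule nat_pow_pow[OF yc])
      ultimately show "y [^] (card M div card (T (Suc n))) \<in> T (Suc n)"
        by simp
    qed
  qed
  show ?thesis using main[of c] Tc y by simp
qed


lemma index_formula:
  assumes fin: "finite (carrier G)" and M: "M \<lhd> G" and H: "subgroup H G"
  shows "\<exists>j. card (rcosets H) = (card M div card (M \<inter> H)) * j"
proof -
  have Ms: "subgroup M G" using M normal_imp_subgroup by blast
  interpret SI: second_isomorphism_grp M G H
    unfolding second_isomorphism_grp_def second_isomorphism_grp_axioms_def using M H by blast
  have MH: "subgroup (M <#> H) G" using mult_norm_subgroup[OF M H] .
  have MHs: "subgroup (M \<inter> H) G" using subgroups_Inter_pair[OF Ms H] .
  have "order (G\<lparr>carrier := H\<rparr> Mod (M \<inter> H)) = order (G\<lparr>carrier := M <#> H\<rparr> Mod M)"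
    using iso_same_order[OF SI.normal_intersection_quotient_isom] .
  hence r: "card (rcosets\<^bsub>G\<lparr>carrier := H\<rparr>\<^esub> (M \<inter> H)) = card (rcosets\<^bsub>G\<lparr>carrier := M <#> H\<rparr>\<^esub> M)"
    unfolding order_def FactGroup_def by simp
  have MsubMH: "M \<subseteq> M <#> H"
  proof
    fix m assume m: "m \<in> M"
    hence "m = m \<otimes> \<one>" using Ms subgroup.subset by (metis r_one subsetD)
    thus "m \<in> M <#> H" using m subgroup.one_closed[OF H] unfolding set_mult_def by blast
  qed
  have l1: "card (rcosets\<^bsub>G\<lparr>carrier := H\<rparr>\<^esub> (M \<inter> H)) * card (M \<inter> H) = card H"
    using group.lagrange[OF subgroup_imp_group[OF H] subgroup_incl[OF MHs H]] by (simp add: order_def)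
  have l2: "card (rcosets\<^bsub>G\<lparr>carrier := M <#> H\<rparr>\<^esub> M) * card M = card (M <#> H)"
    using group.lagrange[OF subgroup_imp_group[OF MH] subgroup_incl[OF Ms MH MsubMH]] by (simp add: order_def)
  have l3: "card (rcosets H) * card H = card (carrier G)"
    using lagrange[OF H] by (simp add: order_def)
  obtain j where j: "card (carrier G) = card (M <#> H) * j"
    using card_subgroup_dvd[OF fin MH subgroup_self] subgroup.subset[OF MH] by blast
  obtain s where s: "card M = card (M \<inter> H) * s"
    using card_subgroup_dvd[OF fin MHs Ms] by blast
  have ipos: "card (M \<inter> H) > 0" using card_subgroup_pos[OF fin MHs] .
  define r0 where "r0 = card (rcosets\<^bsub>G\<lparr>carrier := H\<rparr>\<^esub> (M \<inter> H))"
  have rpos: "r0 > 0" using l1 card_subgroup_pos[OF fin H] unfolding r0_def by (metis gr0I mult_0)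
  have "card (rcosets H) * (r0 * card (M \<inter> H)) = (r0 * card (M \<inter> H)) * (s * j)"
    using l1 l2 l3 j s r unfolding r0_def by (simp add: ac_simps)
  hence "card (rcosets H) = s * j" using rpos ipos by simp
  moreover have "card M div card (M \<inter> H) = s" using s ipos by simp
  ultimately show ?thesis by blast
qed

lemma nilpotent_normal_in_S:
  assumes fin: "finite (carrier G)" and M: "M \<lhd> G" and nil: "nilpotent_group (G\<lparr>carrier := M\<rparr>)"
  shows "M \<subseteq> S_set G"
proof
  fix x assume x: "x \<in> M"
  have Ms: "subgroup M G" using M normal_imp_subgroup by blast
  have xc: "x \<in> carrier G" using x Ms subgroup.subset by blast
  obtain c where "lower_central_series (G\<lparr>carrier := M\<rparr>) c = {\<one>\<^bsub>G\<lparr>carrier := M\<rparr>\<^esub>}"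
    using nil unfolding nilpotent_group_def by blast
  hence c: "lcs G M c = {\<one>}" using lcs_consistent[OF Ms] by simp
  show "x \<in> S_set G"
    unfolding S_set_def
  proof (intro CollectI conjI allI impI xc)
    fix H assume "subgroup H G \<and> finite (rcosets H)"
    hence H: "subgroup H G" by blast
    have MHs: "subgroup (M \<inter> H) G" using subgroups_Inter_pair[OF Ms H] .
    have "x [^] (card M div card (M \<inter> H)) \<in> M \<inter> H"
      using nilpotent_power[OF fin Ms c MHs _ x] by blast
    hence xi: "x [^] (card M div card (M \<inter> H)) \<in> H" by blast
    obtain j where j: "card (rcosets H) = (card M div card (M \<inter> H)) * j"
      using index_formula[OF fin M H] by blast
    have "x [^] card (rcosets H) = (x [^] (card M div card (M \<inter> H))) [^] j"
      unfolding j using nat_pow_pow[OF xc] by simp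
    thus "x [^] card (rcosets H) \<in> H" using xi subgroupE(4)[OF H] by (metis H subgroup_int_pow_closed int_pow_int)
  qed
qed


lemma pgroup_center:
  assumes fin: "finite (carrier G)" and p: "Factorial_Ring.prime p" and card: "card (carrier G) = p ^ b" and b: "b > 0"
  shows "\<exists>z\<in>carrier G. z \<noteq> \<one> \<and> (\<forall>g\<in>carrier G. z \<otimes> g = g \<otimes> z)"
proof (rule ccontr)
  assume nz: "\<not> ?thesis"
  define \<phi> where "\<phi> = (\<lambda>g. (\<lambda>h \<in> carrier G. g \<otimes> h \<otimes> (inv g)))"
  interpret A: group_action G "carrier G" \<phi> unfolding \<phi>_def using action_by_conjugation .
  have orb: "orbit G \<phi> x = (\<lambda>g. g \<otimes> x \<otimes> inv g) ` carrier G" if "x \<in> carrier G" for x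
    using that unfolding orbit_def \<phi>_def by auto
  have O1: "orbit G \<phi> \<one> = {\<one>}" using orb[of \<one>] by auto
  have cen: "x = \<one>" if x: "x \<in> carrier G" and c1: "card (orbit G \<phi> x) = 1" for x
  proof -
    have "x \<in> (\<lambda>g. g \<otimes> x \<otimes> inv g) ` carrier G"
      by (rule image_eqI[where x="\<one>"]) (simp_all add: x)
    hence xo: "x \<in> orbit G \<phi> x" using orb[OF x] by simp
    obtain y where "orbit G \<phi> x = {y}" using card_1_singletonE[OF c1] by blast
    hence ox: "orbit G \<phi> x = {x}" using xo by simp
    have "x \<otimes> g = g \<otimes> x" if g: "g \<in> carrier G" for g
    proof -
      have "g \<otimes> x \<otimes> inv g = x" using ox orb[OF x] g by blast
      hence "g \<otimes> x \<otimes> inv g \<otimes> g = x \<otimes> g" by simp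
      thus ?thesis using g x by (simp add: m_assoc)
    qed
    thus ?thesis using nz x by blast
  qed
  have pd: "p dvd card (orbit G \<phi> x)" if x: "x \<in> carrier G" and x1: "x \<noteq> \<one>" for x
  proof -
    have "card (orbit G \<phi> x) * card (stabilizer G \<phi> x) = p ^ b"
      using A.orbit_stabilizer_theorem[OF x] card unfolding order_def by simp
    hence "card (orbit G \<phi> x) dvd p ^ b" by (metis dvd_triv_left)
    then obtain k where k: "k \<le> b" "card (orbit G \<phi> x) = p ^ k" using divides_primepow_nat[OF p] by blast
    have "k \<noteq> 0" using cen[OF x] x1 k by (metis power_0)
    thus ?thesis using k by simp
  qed
  have finO: "finite (orbits G (carrier G) \<phi>)"
    unfolding orbits_def using fin by simp
  have sum: "(\<Sum>orb\<in>orbits G (carrier G) \<phi>. card orb) = p ^ b"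
  proof -
    have "(\<Sum>orb\<in>orbits G (carrier G) \<phi>. card orb) = (\<Sum>orb\<in>orbits G (carrier G) \<phi>. \<Sum>x\<in>orb. (1::nat))"
      by simp
    also have "\<dots> = (\<Sum>x\<in>carrier G. 1)" using A.disjoint_sum[OF fin] .
    finally show ?thesis using card by simp
  qed
  have O1in: "{\<one>} \<in> orbits G (carrier G) \<phi>" unfolding orbits_def using O1 by force
  have "p dvd (\<Sum>orb\<in>orbits G (carrier G) \<phi> - {{\<one>}}. card orb)"
  proof (rule dvd_sum)
    fix orb assume "orb \<in> orbits G (carrier G) \<phi> - {{\<one>}}"
    then obtain x where x: "x \<in> carrier G" "orb = orbit G \<phi> x" "orb \<noteq> {\<one>}"
      unfolding orbits_def by blast
    hence "x \<noteq> \<one>" using O1 by blast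
    thus "p dvd card orb" using pd x by blast
  qed
  moreover have "(\<Sum>orb\<in>orbits G (carrier G) \<phi>. card orb) = card {\<one>} + (\<Sum>orb\<in>orbits G (carrier G) \<phi> - {{\<one>}}. card orb)"
    using sum.remove[OF finO O1in, of card] .
  ultimately have d1: "p dvd p ^ b - 1" using sum by simp
  have d2: "p dvd p ^ b" using b by simp
  have ge: "p ^ b \<ge> 1" using p prime_gt_0_nat by (simp add: Suc_leI)
  have "p dvd p ^ b - (p ^ b - 1)" using dvd_diff_nat[OF d2 d1] .
  moreover have "p ^ b - (p ^ b - 1) = 1" using ge by simp
  ultimately have "p dvd 1" by simp
  thus False using p by simp
qed


lemma ucs_props:
  assumes N: "subgroup N G"
  shows "ucs G N i \<subseteq> N \<and> subgroup (ucs G N i) G \<and>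
         (\<forall>h\<in>N. \<forall>x\<in>ucs G N i. h \<otimes> x \<otimes> inv h \<in> ucs G N i)"
proof (induct i)
  case 0
  have "\<one> \<in> N" using N subgroup.one_closed by blast
  moreover have "h \<otimes> \<one> \<otimes> inv h = \<one>" if "h \<in> N" for h
    using that N subgroup.subset by (metis r_one r_inv subsetD)
  ultimately show ?case using triv_subgroup by simp
next
  case (Suc i)
  have Nc: "N \<subseteq> carrier G" using N subgroup.subset by blast
  have Z: "subgroup (ucs G N i) G" and ZN: "ucs G N i \<subseteq> N"
    and I: "\<And>h x. h \<in> N \<Longrightarrow> x \<in> ucs G N i \<Longrightarrow> h \<otimes> x \<otimes> inv h \<in> ucs G N i"
    using Suc by auto
  have S1: "ucs G N (Suc i) \<subseteq> N" by auto
  have one: "\<one> \<in> ucs G N (Suc i)"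
    using subgroup.one_closed[OF N] subgroup.one_closed[OF Z] Nc by auto
  have inv: "inv x \<in> ucs G N (Suc i)" if x: "x \<in> ucs G N (Suc i)" for x
  proof -
    have xN: "x \<in> N" using x by simp
    have "comm G (inv x) g \<in> ucs G N i" if g: "g \<in> N" for g
    proof -
      have e: "comm G (inv x) g = inv x \<otimes> inv (comm G x g) \<otimes> inv (inv x)"
        using comm_inv_left xN g Nc by blast
      have "comm G x g \<in> ucs G N i" using x g by simp
      hence "inv (comm G x g) \<in> ucs G N i" using subgroup.m_inv_closed[OF Z] by blast
      thus ?thesis unfolding e using I subgroup.m_inv_closed[OF N xN] by blast
    qed
    thus ?thesis using subgroup.m_inv_closed[OF N xN] by simp
  qed
  have mult: "x \<otimes> y \<in> ucs G N (Suc i)" if x: "x \<in> ucs G N (Suc i)" and y: "y \<in> ucs G N (Suc i)" for x y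
  proof -
    have xN: "x \<in> N" and yN: "y \<in> N" using x y by simp_all
    have "comm G (x \<otimes> y) g \<in> ucs G N i" if g: "g \<in> N" for g
    proof -
      have e: "comm G (x \<otimes> y) g = (x \<otimes> comm G y g \<otimes> inv x) \<otimes> comm G x g"
        using comm_mult_left xN yN g Nc by blast
      have "comm G y g \<in> ucs G N i" "comm G x g \<in> ucs G N i" using x y g by simp_all
      thus ?thesis unfolding e using I[OF xN] subgroup.m_closed[OF Z] by blast
    qed
    thus ?thesis using subgroup.m_closed[OF N xN yN] by simp
  qed
  have sub: "subgroup (ucs G N (Suc i)) G"
    by (rule subgroupI) (use S1 Nc one inv mult in blast)+
  have conj: "h \<otimes> x \<otimes> inv h \<in> ucs G N (Suc i)" if h: "h \<in> N" and x: "x \<in> ucs G N (Suc i)" for h x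
  proof -
    have xN: "x \<in> N" using x by simp
    have hc: "h \<in> carrier G" "x \<in> carrier G" using h xN Nc by blast+
    have "comm G (h \<otimes> x \<otimes> inv h) g \<in> ucs G N i" if g: "g \<in> N" for g
    proof -
      have gc: "g \<in> carrier G" using g Nc by blast
      define g' where "g' = inv h \<otimes> g \<otimes> h"
      have g'N: "g' \<in> N" unfolding g'_def using subgroup_conj[OF N subgroup.m_inv_closed[OF N h] g] hc by simp
      have g'c: "g' \<in> carrier G" using g'N Nc by blast
      have "h \<otimes> g' \<otimes> inv h = g" unfolding g'_def using hc gc by (simp add: m_assoc)
      hence e: "comm G (h \<otimes> x \<otimes> inv h) g = h \<otimes> comm G x g' \<otimes> inv h"
        using conj_comm[OF hc(1) hc(2) g'c] by simp
      have "comm G x g' \<in> ucs G N i" using x g'N by simp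
      thus ?thesis unfolding e using I[OF h] by blast
    qed
    moreover have "h \<otimes> x \<otimes> inv h \<in> N" using subgroup_conj[OF N h xN] .
    ultimately show ?thesis by simp
  qed
  show ?case using S1 sub conj by blast
qed

lemma ucs_mono:
  assumes N: "subgroup N G"
  shows "ucs G N i \<subseteq> ucs G N (Suc i)"
proof
  fix x assume x: "x \<in> ucs G N i"
  note P = ucs_props[OF N, of i]
  have Z: "subgroup (ucs G N i) G" and ZN: "ucs G N i \<subseteq> N"
    and I: "\<And>h x. h \<in> N \<Longrightarrow> x \<in> ucs G N i \<Longrightarrow> h \<otimes> x \<otimes> inv h \<in> ucs G N i"
    using P by auto
  have Nc: "N \<subseteq> carrier G" using N subgroup.subset by blast
  have xN: "x \<in> N" using x ZN by blast
  have "comm G x g \<in> ucs G N i" if g: "g \<in> N" for g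
  proof -
    have c: "x \<in> carrier G" "g \<in> carrier G" using xN g Nc by blast+
    have "comm G x g = x \<otimes> (g \<otimes> inv x \<otimes> inv g)" using c by (simp add: comm_def m_assoc)
    moreover have "g \<otimes> inv x \<otimes> inv g \<in> ucs G N i"
      using I[OF g subgroup.m_inv_closed[OF Z x]] .
    ultimately show ?thesis using subgroup.m_closed[OF Z x] by simp
  qed
  thus "x \<in> ucs G N (Suc i)" using xN by simp
qed

lemma central_series:
  assumes N: "subgroup N G" and c: "ucs G N c = N"
  shows "lcs G N c = {\<one>}"
proof -
  have "n \<le> c \<Longrightarrow> lcs G N n \<subseteq> ucs G N (c - n)" for n
  proof (induct n)
    case 0 thus ?case using c by simp
  next
    case (Suc n)
    hence IH: "lcs G N n \<subseteq> ucs G N (Suc (c - Suc n))" using Suc_diff_Suc by simp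
    have Z: "subgroup (ucs G N (c - Suc n)) G" using ucs_props[OF N] by blast
    have "(\<Union>x \<in> lcs G N n. \<Union>y \<in> N. {comm G x y}) \<subseteq> ucs G N (c - Suc n)"
      using IH by auto
    thus ?case using generate_subgroup_incl[OF _ Z] by simp
  qed
  hence "lcs G N c \<subseteq> {\<one>}" by (metis diff_self_eq_0 order_refl ucs.simps(1))
  moreover have "\<one> \<in> lcs G N c" using lcs_props[OF N, of c] subgroup.one_closed by blast
  ultimately show ?thesis by blast
qed


lemma syl_nonempty:
  assumes fin: "finite (carrier G)" and p: "Factorial_Ring.prime p"
  shows "\<exists>P. P \<in> syl G p"
proof -
  define a where "a = multiplicity p (order G)"
  have "p ^ a dvd order G" unfolding a_def by (rule multiplicity_dvd)
  then obtain m where m: "order G = p ^ a * m" by blast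
  obtain P where "subgroup P G" "card P = p ^ a"
    using sylow_thm[OF p is_group m fin] by blast
  thus ?thesis unfolding syl_def a_def by blast
qed

lemma Op_subgroup:
  assumes fin: "finite (carrier G)" and p: "Factorial_Ring.prime p"
  shows "subgroup (Op G p) G"
proof (rule subgroupI)
  show "Op G p \<subseteq> carrier G" unfolding Op_def by blast
  have "\<one> \<in> Op G p" unfolding Op_def syl_def
    using subgroup.one_closed by (simp add: Ball_def) blast
  thus "Op G p \<noteq> {}" by blast
  fix a assume a: "a \<in> Op G p"
  have "inv a \<in> P" if "P \<in> syl G p" for P
    using that a subgroup.m_inv_closed[of P G a] unfolding Op_def syl_def by blast
  thus "inv a \<in> Op G p" using a unfolding Op_def by simp
  fix b assume b: "b \<in> Op G p"
  have "a \<otimes> b \<in> P" if "P \<in> syl G p" for P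
    using that a b subgroup.m_closed[of P G a b] unfolding Op_def syl_def by blast
  thus "a \<otimes> b \<in> Op G p" using a b unfolding Op_def by simp
qed

lemma conj_subgroup:
  assumes P: "subgroup P G" and g: "g \<in> carrier G"
  shows "subgroup ((\<lambda>x. g \<otimes> x \<otimes> inv g) ` P) G" and "card ((\<lambda>x. g \<otimes> x \<otimes> inv g) ` P) = card P"
proof -
  have Pc: "P \<subseteq> carrier G" using P subgroup.subset by blast
  show "subgroup ((\<lambda>x. g \<otimes> x \<otimes> inv g) ` P) G"
  proof (rule subgroupI)
    show "(\<lambda>x. g \<otimes> x \<otimes> inv g) ` P \<subseteq> carrier G" using Pc g by auto
    show "(\<lambda>x. g \<otimes> x \<otimes> inv g) ` P \<noteq> {}" using subgroup.one_closed[OF P] by blast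
    fix a assume "a \<in> (\<lambda>x. g \<otimes> x \<otimes> inv g) ` P"
    then obtain x where x: "x \<in> P" "a = g \<otimes> x \<otimes> inv g" by blast
    have xc: "x \<in> carrier G" using x Pc by blast
    have "inv a = g \<otimes> inv x \<otimes> inv g" using x xc g by (simp add: inv_mult_group m_assoc)
    thus "inv a \<in> (\<lambda>x. g \<otimes> x \<otimes> inv g) ` P" using subgroup.m_inv_closed[OF P x(1)] by blast
    fix b assume "b \<in> (\<lambda>x. g \<otimes> x \<otimes> inv g) ` P"
    then obtain y where y: "y \<in> P" "b = g \<otimes> y \<otimes> inv g" by blast
    have yc: "y \<in> carrier G" using y Pc by blast
    have "a \<otimes> b = g \<otimes> (x \<otimes> y) \<otimes> inv g" using x y xc yc g by (simp add: m_assoc)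
    thus "a \<otimes> b \<in> (\<lambda>x. g \<otimes> x \<otimes> inv g) ` P" using subgroup.m_closed[OF P x(1) y(1)] by blast
  qed
  have "inj_on (\<lambda>x. g \<otimes> x \<otimes> inv g) P"
  proof (rule inj_onI)
    fix x y assume xy: "x \<in> P" "y \<in> P" "g \<otimes> x \<otimes> inv g = g \<otimes> y \<otimes> inv g"
    hence c: "x \<in> carrier G" "y \<in> carrier G" using Pc by blast+
    have "inv g \<otimes> (g \<otimes> x \<otimes> inv g) \<otimes> g = inv g \<otimes> (g \<otimes> y \<otimes> inv g) \<otimes> g" using xy by simp
    thus "x = y" using c g by (simp add: m_assoc)
  qed
  thus "card ((\<lambda>x. g \<otimes> x \<otimes> inv g) ` P) = card P" by (rule card_image)
qed

lemma Op_normal: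
  assumes fin: "finite (carrier G)" and p: "Factorial_Ring.prime p"
  shows "Op G p \<lhd> G"
proof (rule normal_invI[OF Op_subgroup[OF fin p]])
  fix g x assume g: "g \<in> carrier G" and x: "x \<in> Op G p"
  have xc: "x \<in> carrier G" using x unfolding Op_def by blast
  have "g \<otimes> x \<otimes> inv g \<in> P" if P: "P \<in> syl G p" for P
  proof -
    have Ps: "subgroup P G" and Pcard: "card P = p ^ multiplicity p (order G)" using P unfolding syl_def by auto
    have ig: "inv g \<in> carrier G" using g by simp
    have "(\<lambda>y. inv g \<otimes> y \<otimes> inv (inv g)) ` P \<in> syl G p"
      using conj_subgroup[OF Ps ig] Pcard unfolding syl_def by simp
    hence "x \<in> (\<lambda>y. inv g \<otimes> y \<otimes> inv (inv g)) ` P" using x unfolding Op_def by blast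
    then obtain y where y: "y \<in> P" "x = inv g \<otimes> y \<otimes> inv (inv g)" by blast
    have yc: "y \<in> carrier G" using y Ps subgroup.subset by blast
    have "g \<otimes> x \<otimes> inv g = y" using y(2) yc g by (simp add: m_assoc)
    thus ?thesis using y by simp
  qed
  thus "g \<otimes> x \<otimes> inv g \<in> Op G p" unfolding Op_def using g xc by simp
qed

lemma Op_pow:
  assumes fin: "finite (carrier G)" and p: "Factorial_Ring.prime p" and x: "x \<in> Op G p"
  shows "x [^] (p ^ multiplicity p (order G)) = \<one>"
proof -
  obtain P where P: "P \<in> syl G p" using syl_nonempty[OF fin p] by blast
  have Ps: "subgroup P G" and Pcard: "card P = p ^ multiplicity p (order G)" using P unfolding syl_def by auto
  have xP: "x \<in> P" using x P unfolding Op_def by blast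
  have "x [^]\<^bsub>G\<lparr>carrier := P\<rparr>\<^esub> order (G\<lparr>carrier := P\<rparr>) = \<one>\<^bsub>G\<lparr>carrier := P\<rparr>\<^esub>"
    using group.pow_order_eq_1[OF subgroup_imp_group[OF Ps]] xP by simp
  thus ?thesis using Pcard unfolding order_def by (simp add: nat_pow_consistent[symmetric])
qed

lemma Op_inter:
  assumes fin: "finite (carrier G)" and p: "Factorial_Ring.prime p" and q: "Factorial_Ring.prime q"
    and pq: "p \<noteq> q" and x: "x \<in> Op G p" "x \<in> Op G q"
  shows "x = \<one>"
proof -
  have xc: "x \<in> carrier G" using x unfolding Op_def by blast
  have "ord x dvd p ^ multiplicity p (order G)" using Op_pow[OF fin p x(1)] pow_eq_id[OF xc] by blast
  moreover have "ord x dvd q ^ multiplicity q (order G)" using Op_pow[OF fin q x(2)] pow_eq_id[OF xc] by blast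
  moreover have "coprime (p ^ multiplicity p (order G)) (q ^ multiplicity q (order G))"
    using primes_coprime[OF p q pq] by simp
  ultimately have "ord x = 1" using coprime_common_divisor_nat by blast
  thus ?thesis using ord_eq_1[OF xc] by simp
qed

lemma Fit_subgroup:
  assumes fin: "finite (carrier G)"
  shows "subgroup (Fit G) G"
  unfolding Fit_def by (rule generate_is_subgroup) (auto simp: Op_def)

lemma Op_Fit:
  assumes "Factorial_Ring.prime p"
  shows "Op G p \<subseteq> Fit G"
  unfolding Fit_def using assms by (auto intro: generate.incl)

lemma Fit_normal:
  assumes fin: "finite (carrier G)"
  shows "Fit G \<lhd> G"
  unfolding Fit_def
proof (rule normal_generateI)
  show "(\<Union>p\<in>{p. Factorial_Ring.prime p}. Op G p) \<subseteq> carrier G" by (auto simp: Op_def)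
  fix h g assume h: "h \<in> (\<Union>p\<in>{p. Factorial_Ring.prime p}. Op G p)" and g: "g \<in> carrier G"
  then obtain p where p: "Factorial_Ring.prime p" "h \<in> Op G p" by blast
  have "g \<otimes> h \<otimes> inv g \<in> Op G p"
    using Op_normal[OF fin p(1)] p(2) g normal_inv_iff by blast
  thus "g \<otimes> h \<otimes> inv g \<in> (\<Union>p\<in>{p. Factorial_Ring.prime p}. Op G p)" using p(1) by blast
qed


lemma p_part_in_Op:
  assumes fin: "finite (carrier G)" and p: "Factorial_Ring.prime p" and x: "x \<in> S_set G"
    and w: "w = x [^] (k::nat)" and wp: "w [^] (p ^ e) = \<one>"
  shows "w \<in> Op G p"
proof -
  have xc: "x \<in> carrier G" using x unfolding S_set_def by blast
  have wc: "w \<in> carrier G" using w xc by simp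
  have "w \<in> P" if P: "P \<in> syl G p" for P
  proof -
    have Ps: "subgroup P G" and Pcard: "card P = p ^ multiplicity p (order G)" using P unfolding syl_def by auto
    define mP where "mP = card (rcosets P)"
    have finr: "finite (rcosets P)" using fin unfolding RCOSETS_def r_coset_def by auto
    have xm: "x [^] mP \<in> P" using x Ps finr unfolding S_set_def mP_def by blast
    have lag: "mP * p ^ multiplicity p (order G) = order G" using lagrange[OF Ps] Pcard unfolding mP_def by simp
    have opos: "order G > 0" using fin order_gt_0_iff_finite by blast
    have mP0: "mP \<noteq> 0" using lag opos by (metis mult_0 less_not_refl)
    have npd: "\<not> p dvd mP"
    proof
      assume "p dvd mP"
      then obtain r where "mP = p * r" by blast
      hence "p ^ Suc (multiplicity p (order G)) dvd order G" using lag by (metis dvd_triv_left mult.assoc mult.commute power_Suc)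
      moreover have "order G \<noteq> 0" using opos by simp
      moreover have "\<not> is_unit p" using prime_gt_1_nat[OF p] by simp
      ultimately have "Suc (multiplicity p (order G)) \<le> multiplicity p (order G)"
        using multiplicity_geI by blast
      thus False by simp
    qed
    have "coprime p mP" using prime_imp_coprime[OF p npd] .
    hence cop: "coprime mP (p ^ e)" by (simp add: coprime_commute)
    obtain c d where cd: "mP * c = p ^ e * d + gcd mP (p ^ e)" using bezout_nat[OF mP0] by blast
    hence cd1: "mP * c = p ^ e * d + 1" using cop by simp
    have "w [^] (mP * c) = (w [^] (p ^ e)) [^] d \<otimes> w"
      unfolding cd1 using wc by (simp add: nat_pow_pow nat_pow_mult[symmetric])
    hence w1: "w [^] (mP * c) = w" using wp wc by simp
    have "w [^] (mP * c) = (x [^] mP) [^] (k * c)"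
      unfolding w using xc by (simp add: nat_pow_pow mult_ac)
    moreover have "(x [^] mP) [^] (k * c) \<in> P"
      using xm Ps by (metis subgroup_int_pow_closed int_pow_int)
    ultimately show ?thesis using w1 by simp
  qed
  thus ?thesis unfolding Op_def using wc by simp
qed

lemma S_sub_Fit:
  assumes fin: "finite (carrier G)" and x: "x \<in> S_set G"
  shows "x \<in> Fit G"
proof -
  have xc: "x \<in> carrier G" using x unfolding S_set_def by blast
  have FS: "subgroup (Fit G) G" using Fit_subgroup[OF fin] .
  have main: "\<And>j::nat. ord (x [^] j) = n \<Longrightarrow> x [^] j \<in> Fit G" for n
  proof (induct n rule: less_induct)
    case (less n)
    fix j :: nat assume oj: "ord (x [^] j) = n"
    define y where "y = x [^] j"
    have yc: "y \<in> carrier G" unfolding y_def using xc by simp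
    have n1: "n \<ge> 1" using ord_ge_1[OF fin yc] oj unfolding y_def by simp
    show "x [^] j \<in> Fit G"
    proof (cases "n = 1")
      case True
      hence "y = \<one>" using ord_eq_1[OF yc] oj unfolding y_def by simp
      thus ?thesis using subgroup.one_closed[OF FS] unfolding y_def by simp
    next
      case False
      obtain p where p: "Factorial_Ring.prime p" "p dvd n" using prime_factor_nat[OF False] by blast
      define e where "e = multiplicity p n"
      define m' where "m' = n div p ^ e"
      have n0: "n \<noteq> 0" using n1 by simp
      have nm: "n = p ^ e * m'" unfolding m'_def e_def using multiplicity_dvd[of p n] by simp
      have nu: "\<not> is_unit p" using prime_gt_1_nat[OF p(1)] by simp
      have npm: "\<not> p dvd m'" unfolding m'_def e_def by (rule multiplicity_decompose[OF n0 nu])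
      have "p ^ 1 dvd n" using p by simp
      hence e1: "e \<ge> 1" unfolding e_def using multiplicity_geI[OF n0 nu] by blast
      have pe1: "p ^ e > 1" using one_less_power[OF prime_gt_1_nat[OF p(1)]] e1 by simp
      have m'0: "m' > 0" using nm n0 by (metis gr0I mult_0_right)
      have m'n: "m' < n" using nm pe1 m'0 by simp
      have "coprime p m'" using prime_imp_coprime[OF p(1) npm] .
      hence cop: "coprime (p ^ e) m'" by simp
      have pe0: "p ^ e \<noteq> 0" using pe1 by (metis not_one_less_zero)
      obtain s t where st: "p ^ e * s = m' * t + gcd (p ^ e) m'" using bezout_nat[OF pe0] by blast
      hence st1: "p ^ e * s = m' * t + 1" using cop by simp
      define w1 where "w1 = y [^] (p ^ e * s)"
      define w2 where "w2 = y [^] (m' * t)"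
      have w1c: "w1 \<in> carrier G" and w2c: "w2 \<in> carrier G" unfolding w1_def w2_def using yc by simp_all
      have eq: "w1 = w2 \<otimes> y" unfolding w1_def w2_def st1 using yc by (simp add: nat_pow_mult[symmetric])
      have yeq: "y = inv w2 \<otimes> w1" using eq w2c yc by simp
      have yn: "y [^] n = \<one>" using pow_eq_id[OF yc, of n] oj unfolding y_def by simp
      have "w1 [^] m' = \<one>"
      proof -
        have "w1 [^] m' = (y [^] n) [^] s" unfolding w1_def nm using yc by (simp add: nat_pow_pow mult_ac)
        thus ?thesis using yn yc by simp
      qed
      hence "ord w1 dvd m'" using pow_eq_id[OF w1c] by simp
      hence "ord w1 < n" using m'0 m'n by (meson dvd_imp_le le_less_trans)
      moreover have "w1 = x [^] (j * (p ^ e * s))" unfolding w1_def y_def using xc by (simp add: nat_pow_pow)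
      ultimately have w1F: "w1 \<in> Fit G" using less by metis
      have "w2 [^] (p ^ e) = \<one>"
      proof -
        have "w2 [^] (p ^ e) = (y [^] n) [^] t" unfolding w2_def nm using yc by (simp add: nat_pow_pow mult_ac)
        thus ?thesis using yn yc by simp
      qed
      moreover have "w2 = x [^] (j * (m' * t))" unfolding w2_def y_def using xc by (simp add: nat_pow_pow)
      ultimately have "w2 \<in> Op G p" using p_part_in_Op[OF fin p(1) x] by blast
      hence w2F: "w2 \<in> Fit G" using Op_Fit[OF p(1)] by blast
      have "inv w2 \<otimes> w1 \<in> Fit G"
        using subgroup.m_closed[OF FS subgroup.m_inv_closed[OF FS w2F] w1F] .
      thus ?thesis using yeq unfolding y_def by simp
    qed
  qed
  have "x [^] (1::nat) \<in> Fit G" using main by blast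
  thus ?thesis using xc by simp
qed


lemma Op_comm_trivial:
  assumes fin: "finite (carrier G)" and p: "Factorial_Ring.prime p" and q: "Factorial_Ring.prime q"
    and pq: "p \<noteq> q" and a: "a \<in> Op G p" and h: "h \<in> Op G q"
  shows "comm G a h = \<one>"
proof -
  have Sp: "subgroup (Op G p) G" and Sq: "subgroup (Op G q) G" using Op_subgroup fin p q by auto
  have ac: "a \<in> carrier G" and hc: "h \<in> carrier G" using a h unfolding Op_def by auto
  have "h \<otimes> inv a \<otimes> inv h \<in> Op G p"
    using Op_normal[OF fin p] normal_inv_iff hc subgroup.m_inv_closed[OF Sp a] by blast
  moreover have "comm G a h = a \<otimes> (h \<otimes> inv a \<otimes> inv h)" using ac hc by (simp add: comm_def m_assoc)
  ultimately have c1: "comm G a h \<in> Op G p" using subgroup.m_closed[OF Sp a] by simp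
  have "a \<otimes> h \<otimes> inv a \<in> Op G q"
    using Op_normal[OF fin q] normal_inv_iff ac h by blast
  moreover have "comm G a h = (a \<otimes> h \<otimes> inv a) \<otimes> inv h" using ac hc by (simp add: comm_def m_assoc)
  ultimately have c2: "comm G a h \<in> Op G q" using subgroup.m_closed[OF Sq _ subgroup.m_inv_closed[OF Sq h]] by simp
  show ?thesis using Op_inter[OF fin p q pq c1 c2] .
qed

lemma ucs_grow:
  assumes fin: "finite (carrier G)" and ne: "ucs G (Fit G) i \<noteq> Fit G"
  shows "\<exists>a. a \<in> ucs G (Fit G) (Suc i) \<and> a \<notin> ucs G (Fit G) i"
proof -
  define N where "N = Fit G"
  define Z where "Z = ucs G N i"
  have NS: "subgroup N G" unfolding N_def using Fit_subgroup[OF fin] .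
  have Nc: "N \<subseteq> carrier G" using NS subgroup.subset by blast
  have Z: "subgroup Z G" and ZN: "Z \<subseteq> N"
    and I: "\<And>h x. h \<in> N \<Longrightarrow> x \<in> Z \<Longrightarrow> h \<otimes> x \<otimes> inv h \<in> Z"
    using ucs_props[OF NS, of i] unfolding Z_def by auto
  obtain p where p: "Factorial_Ring.prime p" and nsub: "\<not> Op G p \<subseteq> Z"
  proof (rule ccontr)
    assume "\<not> thesis"
    hence "\<forall>p. Factorial_Ring.prime p \<longrightarrow> Op G p \<subseteq> Z" using that by blast
    hence "(\<Union>p\<in>{p. Factorial_Ring.prime p}. Op G p) \<subseteq> Z" by blast
    hence "N \<subseteq> Z" unfolding N_def Fit_def using generate_subgroup_incl[OF _ Z] by blast
    thus False using ZN ne unfolding Z_def N_def by blast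
  qed
  define Ob where "Ob = Op G p"
  have OS: "subgroup Ob G" unfolding Ob_def using Op_subgroup[OF fin p] .
  have ON: "Ob \<subseteq> N" unfolding Ob_def N_def using Op_Fit[OF p] .
  have Oc: "Ob \<subseteq> carrier G" using OS subgroup.subset by blast
  define K where "K = G\<lparr>carrier := Ob\<rparr>"
  have K: "group K" unfolding K_def using subgroup_imp_group[OF OS] .
  define W where "W = Ob \<inter> Z"
  have WS: "subgroup W G" unfolding W_def using subgroups_Inter_pair[OF OS Z] .
  have WO: "W \<subseteq> Ob" unfolding W_def by blast
  have WK: "subgroup W K" unfolding K_def using subgroup_incl[OF WS OS WO] .
  have nK: "W \<lhd> K"
  proof (rule group.normal_invI[OF K WK])
    fix x h assume x: "x \<in> carrier K" and h: "h \<in> W"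
    have xO: "x \<in> Ob" using x unfolding K_def by simp
    have "x \<otimes> h \<otimes> inv x \<in> Ob" using subgroup_conj[OF OS xO] h WO by blast
    moreover have "x \<otimes> h \<otimes> inv x \<in> Z" using I xO ON h unfolding W_def by blast
    ultimately show "x \<otimes>\<^bsub>K\<^esub> h \<otimes>\<^bsub>K\<^esub> inv\<^bsub>K\<^esub> x \<in> W"
      using xO OS unfolding K_def W_def by simp
  qed
  interpret NW: normal W K using nK .
  define Q where "Q = K Mod W"
  have Qg: "group Q" unfolding Q_def using NW.factorgroup_is_group .
  have finO: "finite Ob" using Oc fin finite_subset by blast
  have finQ: "finite (carrier Q)"
  proof -
    have "carrier Q \<subseteq> Pow Ob" unfolding Q_def FactGroup_def K_def RCOSETS_def r_coset_def
      using subgroup.subset[OF WS] WO OS subgroup.m_closed[OF OS] by auto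
    thus ?thesis using finO finite_subset by blast
  qed
  obtain P where P: "P \<in> syl G p" using syl_nonempty[OF fin p] by blast
  have PS: "subgroup P G" and Pcard: "card P = p ^ multiplicity p (order G)" using P unfolding syl_def by auto
  have OP: "Ob \<subseteq> P" using P unfolding Ob_def Op_def by blast
  have "card Ob dvd p ^ multiplicity p (order G)"
    using card_subgroup_dvd[OF fin OS PS OP] Pcard by simp
  then obtain f where f: "card Ob = p ^ f" using divides_primepow_nat[OF p] by blast
  have "card W dvd card Ob" using card_subgroup_dvd[OF fin WS OS WO] .
  hence "card W dvd p ^ f" using f by simp
  then obtain g where g: "g \<le> f" "card W = p ^ g" using divides_primepow_nat[OF p] by blast
  have WneO: "W \<noteq> Ob" using nsub unfolding W_def Ob_def by blast
  hence "card W < card Ob" using WO finO by (meson psubsetI psubset_card_mono)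
  hence gf: "g < f" using g f prime_gt_1_nat[OF p] by (metis leI not_less power_increasing_iff)
  have lag: "card (rcosets\<^bsub>K\<^esub> W) * card W = card Ob"
    using group.lagrange[OF K WK] unfolding order_def K_def by simp
  have "card (rcosets\<^bsub>K\<^esub> W) * p ^ g = p ^ (f - g) * p ^ g"
    using lag f g gf by (simp add: power_add[symmetric])
  hence cQ: "card (carrier Q) = p ^ (f - g)"
    unfolding Q_def FactGroup_def using prime_gt_0_nat[OF p] by simp
  obtain z where z: "z \<in> carrier Q" "z \<noteq> \<one>\<^bsub>Q\<^esub>" and zc: "\<forall>y\<in>carrier Q. z \<otimes>\<^bsub>Q\<^esub> y = y \<otimes>\<^bsub>Q\<^esub> z"
    using group.pgroup_center[OF Qg finQ p cQ] gf by auto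
  obtain a where a: "a \<in> Ob" "z = W #> a"
    using z(1) unfolding Q_def FactGroup_def K_def RCOSETS_def r_coset_def by auto
  have ac: "a \<in> carrier G" using a Oc by blast
  have aW: "a \<notin> W"
  proof
    assume "a \<in> W"
    hence "W #> a = W" using subgroup.rcos_const[OF WS is_group] by blast
    thus False using z(2) a unfolding Q_def FactGroup_def by simp
  qed
  have rK: "W #>\<^bsub>K\<^esub> x = W #> x" for x unfolding K_def r_coset_def by simp
  have commW: "comm G a h \<in> W" if h: "h \<in> Ob" for h
  proof -
    have hc: "h \<in> carrier G" using h Oc by blast
    have hQ: "W #> h \<in> carrier Q" unfolding Q_def FactGroup_def RCOSETS_def using h rK unfolding K_def by auto
    have "z \<otimes>\<^bsub>Q\<^esub> (W #> h) = (W #> h) \<otimes>\<^bsub>Q\<^esub> z" using zc hQ by blast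
    hence "(W #>\<^bsub>K\<^esub> a) <#>\<^bsub>K\<^esub> (W #>\<^bsub>K\<^esub> h) = (W #>\<^bsub>K\<^esub> h) <#>\<^bsub>K\<^esub> (W #>\<^bsub>K\<^esub> a)"
      using a(2) rK unfolding Q_def FactGroup_def by simp
    hence "W #>\<^bsub>K\<^esub> (a \<otimes>\<^bsub>K\<^esub> h) = W #>\<^bsub>K\<^esub> (h \<otimes>\<^bsub>K\<^esub> a)"
      using NW.rcos_sum a(1) h unfolding K_def by simp
    hence eq: "W #> (a \<otimes> h) = W #> (h \<otimes> a)" using rK unfolding K_def by simp
    have "a \<otimes> h \<in> W #> (h \<otimes> a)" using eq rcos_self[OF _ WS] ac hc by (metis m_closed)
    hence "(a \<otimes> h) \<otimes> inv (h \<otimes> a) \<in> W" using subgroup.rcos_module_imp[OF WS is_group] ac hc by blast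
    moreover have "(a \<otimes> h) \<otimes> inv (h \<otimes> a) = comm G a h" using ac hc by (simp add: comm_def m_assoc inv_mult_group)
    ultimately show ?thesis by simp
  qed
  have aN: "a \<in> N" using a ON by blast
  have C: "comm G a h \<in> Z" if q: "Factorial_Ring.prime q" and h: "h \<in> Op G q" for q h
  proof (cases "q = p")
    case True thus ?thesis using commW h unfolding Ob_def W_def by blast
  next
    case False
    have "comm G a h = \<one>" using Op_comm_trivial[OF fin p q _ _ h] False a(1) unfolding Ob_def by metis
    thus ?thesis using subgroup.one_closed[OF Z] by simp
  qed
  have "comm G a h \<in> Z" if h: "h \<in> N" for h
    using h unfolding N_def Fit_def
  proof (induct h rule: generate.induct)
    case one thus ?case using ac subgroup.one_closed[OF Z] by simp
  next
    case (incl h) thus ?case using C by blast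
  next
    case (inv h)
    then obtain q where q: "Factorial_Ring.prime q" "h \<in> Op G q" by blast
    have "inv h \<in> Op G q" using subgroup.m_inv_closed[OF Op_subgroup[OF fin q(1)] q(2)] .
    thus ?case using C q(1) by blast
  next
    case (eng h1 h2)
    have h1N: "h1 \<in> N" and h2N: "h2 \<in> N" using eng(1,3) unfolding N_def Fit_def by auto
    have c: "h1 \<in> carrier G" "h2 \<in> carrier G" using h1N h2N Nc by blast+
    have e: "comm G a (h1 \<otimes> h2) = comm G a h1 \<otimes> (h1 \<otimes> comm G a h2 \<otimes> inv h1)"
      using comm_mult_right[OF ac c] .
    show ?case unfolding e using subgroup.m_closed[OF Z eng(2) I[OF h1N eng(4)]] .
  qed
  hence "a \<in> ucs G N (Suc i)" using aN unfolding Z_def by simp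
  moreover have "a \<notin> ucs G N i" using aW a(1) unfolding Z_def W_def by blast
  ultimately show ?thesis unfolding N_def by blast
qed

lemma Fit_nilpotent:
  assumes fin: "finite (carrier G)"
  shows "nilpotent_group (G\<lparr>carrier := Fit G\<rparr>)"
proof -
  define N where "N = Fit G"
  have NS: "subgroup N G" unfolding N_def using Fit_subgroup[OF fin] .
  have finN: "finite N" using NS subgroup.subset fin finite_subset by blast
  have "\<exists>c. ucs G N c = N"
  proof (rule ccontr)
    assume "\<not> ?thesis"
    hence ne: "ucs G N i \<noteq> N" for i by blast
    have "i < card (ucs G N i)" for i
    proof (induct i)
      case 0 thus ?case by simp
    next
      case (Suc i)
      obtain a where a: "a \<in> ucs G N (Suc i)" "a \<notin> ucs G N i" using ucs_grow[OF fin ne[unfolded N_def]] unfolding N_def by blast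
      have "ucs G N i \<subset> ucs G N (Suc i)" using ucs_mono[OF NS, of i] a by blast
      moreover have "finite (ucs G N (Suc i))" using ucs_props[OF NS, of "Suc i"] finN finite_subset by blast
      ultimately have "card (ucs G N i) < card (ucs G N (Suc i))" by (rule psubset_card_mono[rotated])
      thus ?case using Suc by simp
    qed
    moreover have "card (ucs G N (card N)) \<le> card N"
      using ucs_props[OF NS, of "card N"] finN card_mono by blast
    ultimately show False by (metis not_le)
  qed
  then obtain c where "ucs G N c = N" by blast
  hence "lcs G N c = {\<one>}" using central_series[OF NS] by simp
  hence "lower_central_series (G\<lparr>carrier := N\<rparr>) c = {\<one>\<^bsub>G\<lparr>carrier := N\<rparr>\<^esub>}"
    using lcs_consistent[OF NS] by simp
  thus ?thesis unfolding nilpotent_group_def N_def using subgroup_imp_group[OF NS[unfolded N_def]] by blast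
qed


end

theorem proposition5p1:
  assumes "group G" and "finite (carrier G)"
  shows "S_set G = fitting_subgroup G"
proof -
  interpret group G by fact
  note fin = assms(2)
  have SF: "S_set G \<subseteq> Fit G" using S_sub_Fit[OF fin] by blast
  have FS: "Fit G \<subseteq> S_set G"
    using nilpotent_normal_in_S[OF fin Fit_normal[OF fin] Fit_nilpotent[OF fin]] .
  have eq: "S_set G = Fit G" using SF FS by blast
  have max: "N \<subseteq> Fit G" if "N \<lhd> G" "nilpotent_group (G\<lparr>carrier := N\<rparr>)" for N
    using nilpotent_normal_in_S[OF fin that] eq by simp
  have "fitting_subgroup G = Fit G" unfolding fitting_subgroup_def
  proof (rule the_equality)
    show "Fit G \<lhd> G \<and> nilpotent_group (G\<lparr>carrier := Fit G\<rparr>) \<and>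
      (\<forall>N. N \<lhd> G \<and> nilpotent_group (G\<lparr>carrier := N\<rparr>) \<longrightarrow> N \<subseteq> Fit G)"
      using Fit_normal[OF fin] Fit_nilpotent[OF fin] max by blast
  next
    fix F assume F: "F \<lhd> G \<and> nilpotent_group (G\<lparr>carrier := F\<rparr>) \<and>
      (\<forall>N. N \<lhd> G \<and> nilpotent_group (G\<lparr>carrier := N\<rparr>) \<longrightarrow> N \<subseteq> F)"
    have "F \<subseteq> Fit G" using F max by blast
    moreover have "Fit G \<subseteq> F" using F Fit_normal[OF fin] Fit_nilpotent[OF fin] by blast
    ultimately show "F = Fit G" by blast
  qed
  thus ?thesis using eq by simp
qed

end
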